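(* Let $2\le p<\infty$ and $1<q\le\infty$, and let $X$ and $Y$ be Banach spaces such that $X$ is an $\mathcal L_{p^*}$-space, where $\frac1p+\frac1{p^*}=1$. Then every almost $p$-summing operator $u:X\to Y$ is Cohen strongly $q$-summing; that is, $\Pi_{al.s.p}(X,Y)\subseteq\mathcal D_q(X,Y)$.
   Context: $r_i$ denote the Rademacher functions. For $1\le s\le\infty$ and a Banach space $E$, $\|(x_i)_{i=1}^m\|_{w,s}:=\sup_{x^*\in B_{E^*}}\|(x^*(x_i))_{i=1}^m\|_s$. An operator $u\in\mathcal L(X,Y)$ is almost $p$-summing ($u\in\Pi_{al.s.p}(X,Y)$) if there is $C\ge0$ with $\left(\int_0^1\left\|\sum_{i=1}^m r_i(t)u(x_i)\right\|^2dt\right)^{1/2}\le C\|(x_i)_{i=1}^m\|_{w,p}$ for all $m$ and $x_1,\dots,x_m\in X$. For $1<q\le\infty$ with conjugate $q^*$, $u$ is Cohen strongly $q$-summing ($u\in\mathcal D_q(X,Y)$) if there is $C\ge0$ with $\sum_{i=1}^m|y_i^*(u(x_i))|\le C\|(x_i)_{i=1}^m\|_q\,\|(y_i^* )_{i=1}^m\|_{w,q^*}$ for all $m$, $x_1,\dots,x_m\in X$, $y_1^*,\dots,y_m^*\in Y^*$, where $\|(x_i)\|_q=(\sum\|x_i\|^q)^{1/q}$. A Banach space $X$ is an $\mathcal L_r$-space if there is $\lambda>1$ such that every finite-dimensional subspace $E$ of $X$ is contained in a finite-dimensional subspace $F$ of $X$ admitting an isomorphism $v:F\to\ell_r^{\dim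 F}$ with $\|v\|\|v^{-1}\|\le\lambda$. *)

theory Defs
  imports "HOL-Analysis.Analysis"
begin

definition rademacher :: "nat \<Rightarrow> real \<Rightarrow> real" where
  "rademacher i t = sgn (sin (2 ^ i * pi * t))"

definition seq_norm :: "ereal \<Rightarrow> nat \<Rightarrow> (nat \<Rightarrow> real) \<Rightarrow> real" where
  "seq_norm s m a =
     (if s = \<infinity> then Sup (insert 0 ((\<lambda>i. \<bar>a i\<bar>) ` {1..m}))
      else (\<Sum>i=1..m. \<bar>a i\<bar> powr real_of_ereal s) powr (1 / real_of_ereal s))"

definition strong_norm :: "ereal \<Rightarrow> nat \<Rightarrow> (nat \<Rightarrow> 'a::real_normed_vector) \<Rightarrow> real" where
  "strong_norm s m x = seq_norm s m (\<lambda>i. norm (x i))"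

definition weak_norm :: "ereal \<Rightarrow> nat \<Rightarrow> (nat \<Rightarrow> 'a::real_normed_vector) \<Rightarrow> real" where
  "weak_norm s m x =
     Sup ((\<lambda>f::'a \<Rightarrow>\<^sub>L real. seq_norm s m (\<lambda>i. blinfun_apply f (x i))) ` {f. norm f \<le> 1})"

definition conj_exp :: "ereal \<Rightarrow> ereal" where
  "conj_exp q = (if q = \<infinity> then 1 else ereal (real_of_ereal q / (real_of_ereal q - 1)))"

definition almost_summing :: "real \<Rightarrow> ('a::real_normed_vector \<Rightarrow>\<^sub>L 'b::real_normed_vector) \<Rightarrow> bool" where
  "almost_summing p u \<longleftrightarrow>
     (\<exists>C\<ge>0. \<forall>(m::nat) (x::nat \<Rightarrow> 'a).
        sqrt (integral {0..1} (\<lambda>t. (norm (\<Sum>i=1..m. rademacher i t *\<^sub>R blinfun_apply u (x i)))\<^sup>2))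
          \<le> C * weak_norm (ereal p) m x)"

definition Cohen_strongly_summing :: "ereal \<Rightarrow> ('a::real_normed_vector \<Rightarrow>\<^sub>L 'b::real_normed_vector) \<Rightarrow> bool" where
  "Cohen_strongly_summing q u \<longleftrightarrow>
     (\<exists>C\<ge>0. \<forall>(m::nat) (x::nat \<Rightarrow> 'a) (y::nat \<Rightarrow> ('b \<Rightarrow>\<^sub>L real)).
        (\<Sum>i=1..m. \<bar>blinfun_apply (y i) (blinfun_apply u (x i))\<bar>)
          \<le> C * strong_norm q m x * weak_norm (conj_exp q) m y)"

definition lr_norm :: "real \<Rightarrow> nat \<Rightarrow> (nat \<Rightarrow> real) \<Rightarrow> real" where
  "lr_norm r n y = (\<Sum>i<n. \<bar>y i\<bar> powr r) powr (1 / r)"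

definition fin_dim_subspace :: "'a::real_vector set \<Rightarrow> bool" where
  "fin_dim_subspace E \<longleftrightarrow> subspace E \<and> (\<exists>B. finite B \<and> E = span B)"

definition Lr_space :: "real \<Rightarrow> 'a::real_normed_vector itself \<Rightarrow> bool" where
  "Lr_space r _ \<longleftrightarrow>
     (\<exists>lam>1. \<forall>E::'a set. fin_dim_subspace E \<longrightarrow>
        (\<exists>F. fin_dim_subspace F \<and> E \<subseteq> F \<and>
           (\<exists>(v::'a \<Rightarrow> nat \<Rightarrow> real) a b.
              (\<forall>x\<in>F. \<forall>y\<in>F. v (x + y) = (\<lambda>i. v x i + v y i)) \<and>
              (\<forall>x\<in>F. \<forall>c. v (c *\<^sub>R x) = (\<lambda>i. c * v x i)) \<and>
              bij_betw v F {z. \<forall>i\<ge>dim F. z i = 0} \<and>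
              (\<forall>x\<in>F. lr_norm r (dim F) (v x) \<le> a * norm x) \<and>
              (\<forall>x\<in>F. norm x \<le> b * lr_norm r (dim F) (v x)) \<and>
              a * b \<le> lam)))"

end

theory Submission
  imports Defs
begin

lemma rad_Suc: "rademacher (Suc k) t = rademacher k (2*t)"
  by (simp add: rademacher_def mult_ac)

lemma rad_Suc2: assumes "k \<ge> 1" shows "rademacher (Suc k) t = rademacher k (2*t - 1)"
proof -
  have e: "2 ^ k * pi * (2 * t - 1) = 2 ^ Suc k * pi * t - real (2^k) * pi"
    by (simp add: algebra_simps)
  have "even ((2::nat)^k)" using assms by simp
  then have c: "cos (real (2^k) * pi) = 1"
  proof -
    have "cos (real (2^k) * pi) = (-1)^(2^k)" by (rule cos_npi)
    also have "\<dots> = 1" using \<open>even ((2::nat)^k)\<close> by simp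
    finally show ?thesis .
  qed
  show ?thesis unfolding rademacher_def e sin_diff sin_npi c by simp
qed

lemma rad1_pos: "0 < t \<Longrightarrow> t < 1/2 \<Longrightarrow> rademacher 1 t = 1"
  unfolding rademacher_def by (simp add: sin_gt_zero)

lemma rad1_neg: "1/2 < t \<Longrightarrow> t < 1 \<Longrightarrow> rademacher 1 t = -1"
proof -
  assume a: "1/2 < t" "t < 1"
  have "0 < sin (2*pi*t - pi)" by (rule sin_gt_zero) (use a in \<open>auto simp: algebra_simps\<close>)
  then have "sin (2*pi*t) < 0" by (simp add: sin_minus_pi)
  then show ?thesis unfolding rademacher_def by simp
qed

definition radsum :: "nat \<Rightarrow> (nat \<Rightarrow> 'v::real_vector) \<Rightarrow> real \<Rightarrow> 'v" where
  "radsum N c t = (\<Sum>k=1..N. rademacher k t *\<^sub>R c k)"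

fun rad_avg :: "nat \<Rightarrow> (nat \<Rightarrow> 'v::real_vector) \<Rightarrow> ('v \<Rightarrow> real) \<Rightarrow> real" where
  "rad_avg 0 c f = f 0"
| "rad_avg (Suc N) c f = (rad_avg N (\<lambda>k. c (Suc k)) (\<lambda>x. f (c 1 + x))
      + rad_avg N (\<lambda>k. c (Suc k)) (\<lambda>x. f (x - c 1))) / 2"

lemma radsum_Suc_gen:
  assumes "\<And>k. k \<ge> 1 \<Longrightarrow> rademacher (Suc k) t = rademacher k s"
  shows "radsum (Suc N) c t = rademacher 1 t *\<^sub>R c 1 + radsum N (\<lambda>k. c (Suc k)) s"
proof -
  have "radsum (Suc N) c t = (\<Sum>k<Suc N. rademacher (Suc k) t *\<^sub>R c (Suc k))"
    unfolding radsum_def by (simp add: sum.atLeast1_atMost_eq)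
  also have "\<dots> = rademacher 1 t *\<^sub>R c 1 + (\<Sum>k<N. rademacher (Suc (Suc k)) t *\<^sub>R c (Suc (Suc k)))"
    by (simp only: sum.lessThan_Suc_shift One_nat_def)
  also have "(\<Sum>k<N. rademacher (Suc (Suc k)) t *\<^sub>R c (Suc (Suc k))) = radsum N (\<lambda>k. c (Suc k)) s"
    unfolding radsum_def by (simp add: sum.atLeast1_atMost_eq assms)
  finally show ?thesis .
qed

lemma radsum_integral:
  "((\<lambda>t. f (radsum N c t)) has_integral rad_avg N c f) {0..1}"
proof (induction N arbitrary: c f)
  case 0
  then show ?case using has_integral_const_real[of "f 0" 0 1] by (simp add: radsum_def)
next
  case (Suc N)
  define c' where "c' = (\<lambda>k. c (Suc k))"
  define A1 where "A1 = rad_avg N c' (\<lambda>x. f (c 1 + x))"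
  define A2 where "A2 = rad_avg N c' (\<lambda>x. f (x - c 1))"
  have I1: "((\<lambda>s. f (c 1 + radsum N c' s)) has_integral A1) (cbox 0 1)"
    using Suc.IH[where c=c' and f="\<lambda>x. f (c 1 + x)"] by (simp add: A1_def)
  have I2: "((\<lambda>s. f (radsum N c' s - c 1)) has_integral A2) (cbox 0 1)"
    using Suc.IH[where c=c' and f="\<lambda>x. f (x - c 1)"] by (simp add: A2_def)
  have J1: "((\<lambda>t. f (c 1 + radsum N c' (2 *\<^sub>R t + 0))) has_integral (A1 /\<^sub>R 2 ^ DIM(real)))
      (cbox ((0 - 0) /\<^sub>R 2) ((1 - 0) /\<^sub>R 2))"
    by (rule has_integral_affinity'[OF I1]) simp
  have J2: "((\<lambda>t. f (radsum N c' (2 *\<^sub>R t + (-1)) - c 1)) has_integral (A2 /\<^sub>R 2 ^ DIM(real)))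
      (cbox ((0 - (-1)) /\<^sub>R 2) ((1 - (-1)) /\<^sub>R 2))"
    by (rule has_integral_affinity'[OF I2]) simp
  have K1: "((\<lambda>t. f (radsum (Suc N) c t)) has_integral A1/2) {0..1/2}"
  proof -
    have "((\<lambda>t. f (c 1 + radsum N c' (2 * t))) has_integral A1/2) {0..1/2}"
      using J1 by simp
    then show ?thesis
    proof (rule has_integral_spike_finite_eq[of "{0,1/2}", THEN iffD1, rotated 2])
      fix t :: real assume "t \<in> {0..1/2} - {0, 1/2}"
      then have t: "0 < t" "t < 1/2" by auto
      show "f (radsum (Suc N) c t) = f (c 1 + radsum N c' (2 * t))"
      proof -
        have "radsum (Suc N) c t = rademacher 1 t *\<^sub>R c 1 + radsum N (\<lambda>k. c (Suc k)) (2*t)"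
          by (rule radsum_Suc_gen) (simp add: rad_Suc)
        moreover have "rademacher (Suc 0) t = 1" using rad1_pos[OF t] by simp
        ultimately show ?thesis by (simp add: c'_def)
      qed
    qed simp
  qed
  have K2: "((\<lambda>t. f (radsum (Suc N) c t)) has_integral A2/2) {1/2..1}"
  proof -
    have "((\<lambda>t. f (radsum N c' (2 * t - 1) - c 1)) has_integral A2/2) {1/2..1}"
      using J2 by simp
    then show ?thesis
    proof (rule has_integral_spike_finite_eq[of "{1/2,1}", THEN iffD1, rotated 2])
      fix t :: real assume "t \<in> {1/2..1} - {1/2, 1}"
      then have t: "1/2 < t" "t < 1" by auto
      show "f (radsum (Suc N) c t) = f (radsum N c' (2 * t - 1) - c 1)"
      proof -
        have "radsum (Suc N) c t = rademacher 1 t *\<^sub>R c 1 + radsum N (\<lambda>k. c (Suc k)) (2*t - 1)"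
          by (rule radsum_Suc_gen) (simp add: rad_Suc2)
        moreover have "rademacher (Suc 0) t = -1" using rad1_neg[OF t] by simp
        ultimately show ?thesis by (simp add: c'_def)
      qed
    qed simp
  qed
  have "((\<lambda>t. f (radsum (Suc N) c t)) has_integral (A1/2 + A2/2)) {0..1}"
    by (rule has_integral_combine[OF _ _ K1 K2]) auto
  then show ?case by (simp add: A1_def A2_def c'_def add_divide_distrib)
qed

lemma rad_avg_mono: "(\<And>x. f x \<le> g x) \<Longrightarrow> rad_avg N c f \<le> rad_avg N c g"
proof (induction N arbitrary: c f g)
  case 0 then show ?case by simp
next
  case (Suc N)
  have "rad_avg N (\<lambda>k. c (Suc k)) (\<lambda>x. f (c 1 + x)) \<le> rad_avg N (\<lambda>k. c (Suc k)) (\<lambda>x. g (c 1 + x))"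
    by (rule Suc.IH) (rule Suc.prems)
  moreover have "rad_avg N (\<lambda>k. c (Suc k)) (\<lambda>x. f (x - c 1)) \<le> rad_avg N (\<lambda>k. c (Suc k)) (\<lambda>x. g (x - c 1))"
    by (rule Suc.IH) (rule Suc.prems)
  ultimately show ?case by simp
qed

lemma rad_avg_lin: "rad_avg N c (\<lambda>x. a * f x + b * g x) = a * rad_avg N c f + b * rad_avg N c g"
proof (induction N arbitrary: c f g)
  case 0 then show ?case by simp
next
  case (Suc N)
  show ?case by (simp add: Suc.IH algebra_simps add_divide_distrib)
qed

lemma rad_avg_const: "rad_avg N c (\<lambda>x. a) = a"
  by (induction N arbitrary: c) auto

lemma rad_avg_add: "rad_avg N c (\<lambda>x. f x + g x) = rad_avg N c f + rad_avg N c g"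
  using rad_avg_lin[of N c 1 f 1 g] by simp

lemma rad_avg_scale: "rad_avg N c (\<lambda>x. a * f x) = a * rad_avg N c f"
  using rad_avg_lin[of N c a f 0 f] by simp

lemma rad_avg_sum: "finite I \<Longrightarrow> rad_avg N c (\<lambda>x. \<Sum>i\<in>I. f i x) = (\<Sum>i\<in>I. rad_avg N c (f i))"
  by (induction I rule: finite_induct) (simp_all add: rad_avg_const rad_avg_add)

lemma rad_avg_comp: "linear h \<Longrightarrow> rad_avg N c (\<lambda>x. f (h x)) = rad_avg N (\<lambda>k. h (c k)) f"
proof (induction N arbitrary: c f)
  case 0 then show ?case by (simp add: linear_0)
next
  case (Suc N)
  have "rad_avg N (\<lambda>k. c (Suc k)) (\<lambda>x. f (h (c 1 + x))) = rad_avg N (\<lambda>k. c (Suc k)) (\<lambda>x. (\<lambda>y. f (h (c 1) + y)) (h x))"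
    using Suc.prems by (simp add: linear_add)
  also have "\<dots> = rad_avg N (\<lambda>k. h (c (Suc k))) (\<lambda>y. f (h (c 1) + y))"
    by (rule Suc.IH[OF Suc.prems])
  finally have 1: "rad_avg N (\<lambda>k. c (Suc k)) (\<lambda>x. f (h (c 1 + x))) = rad_avg N (\<lambda>k. h (c (Suc k))) (\<lambda>y. f (h (c 1) + y))" .
  have "rad_avg N (\<lambda>k. c (Suc k)) (\<lambda>x. f (h (x - c 1))) = rad_avg N (\<lambda>k. c (Suc k)) (\<lambda>x. (\<lambda>y. f (y - h (c 1))) (h x))"
    using Suc.prems by (simp add: linear_diff)
  also have "\<dots> = rad_avg N (\<lambda>k. h (c (Suc k))) (\<lambda>y. f (y - h (c 1)))"
    by (rule Suc.IH[OF Suc.prems])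
  finally have 2: "rad_avg N (\<lambda>k. c (Suc k)) (\<lambda>x. f (h (x - c 1))) = rad_avg N (\<lambda>k. h (c (Suc k))) (\<lambda>y. f (y - h (c 1)))" .
  show ?case using 1 2 by simp
qed

lemma rad_avg_neg: "rad_avg N c f = rad_avg N c (\<lambda>x. f (- x))"
proof (induction N arbitrary: c f)
  case 0 then show ?case by simp
next
  case (Suc N)
  have 1: "rad_avg N (\<lambda>k. c (Suc k)) (\<lambda>x. f (c 1 + x)) = rad_avg N (\<lambda>k. c (Suc k)) (\<lambda>x. f (- (x - c 1)))"
    using Suc.IH[where c="\<lambda>k. c (Suc k)" and f="\<lambda>x. f (c 1 + x)"] by (simp add: algebra_simps)
  have 2: "rad_avg N (\<lambda>k. c (Suc k)) (\<lambda>x. f (x - c 1)) = rad_avg N (\<lambda>k. c (Suc k)) (\<lambda>x. f (- (c 1 + x)))"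
    using Suc.IH[where c="\<lambda>k. c (Suc k)" and f="\<lambda>x. f (x - c 1)"] by (simp add: algebra_simps)
  show ?case using 1 2 by simp
qed

lemma rad_avg_odd: "(\<And>x. f (- x) = - f x) \<Longrightarrow> rad_avg N c f = 0"
proof -
  assume o: "\<And>x. f (- x) = - f x"
  have "rad_avg N c f = rad_avg N c (\<lambda>x. f (- x))" by (rule rad_avg_neg)
  also have "\<dots> = rad_avg N c (\<lambda>x. (-1) * f x)" by (simp add: o)
  finally have "rad_avg N c f = rad_avg N c (\<lambda>x. (-1) * f x)" .
  moreover have "rad_avg N c (\<lambda>x. (-1) * f x) = (-1) * rad_avg N c f" by (rule rad_avg_scale)
  ultimately show ?thesis by linarith
qed

lemma rad_avg_nonneg: "(\<And>x. 0 \<le> f x) \<Longrightarrow> 0 \<le> rad_avg N c f"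
  using rad_avg_mono[of "\<lambda>x. 0" f N c] by (simp add: rad_avg_const)

lemma rad_avg_CS:
  "(rad_avg N c (\<lambda>x. g x * h x))\<^sup>2 \<le> rad_avg N c (\<lambda>x. (g x)\<^sup>2) * rad_avg N c (\<lambda>x. (h x)\<^sup>2)"
proof -
  define G where "G = rad_avg N c (\<lambda>x. (g x)\<^sup>2)"
  define H where "H = rad_avg N c (\<lambda>x. (h x)\<^sup>2)"
  define P where "P = rad_avg N c (\<lambda>x. g x * h x)"
  have key: "0 \<le> G - 2 * l * P + l\<^sup>2 * H" for l
  proof -
    have "0 \<le> rad_avg N c (\<lambda>x. (g x - l * h x)\<^sup>2)" by (rule rad_avg_nonneg) simp
    also have "(\<lambda>x. (g x - l * h x)\<^sup>2) = (\<lambda>x. 1 * (g x)\<^sup>2 + 1 * ((-2 * l) * (g x * h x) + l\<^sup>2 * (h x)\<^sup>2))"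
      by (simp add: fun_eq_iff power2_eq_square algebra_simps)
    finally show ?thesis by (simp only: rad_avg_lin G_def H_def P_def) simp
  qed
  have H0: "0 \<le> H" unfolding H_def by (rule rad_avg_nonneg) simp
  show ?thesis
  proof (cases "H = 0")
    case True
    have "P = 0"
    proof (rule ccontr)
      assume "P \<noteq> 0"
      have "0 \<le> G - 2 * ((G + 1) / (2 * P)) * P" using key[of "(G + 1) / (2 * P)"] True by simp
      also have "\<dots> = -1" using \<open>P \<noteq> 0\<close> by (simp add: field_simps)
      finally show False by simp
    qed
    then show ?thesis using True by (simp add: P_def H_def)
  next
    case False
    then have Hp: "H > 0" using H0 by simp
    have "0 \<le> G - 2 * (P / H) * P + (P / H)\<^sup>2 * H" by (rule key)
    also have "\<dots> = G - P\<^sup>2 / H" using Hp by (simp add: field_simps power2_eq_square)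
    finally have "P\<^sup>2 / H \<le> G" by simp
    then have "P\<^sup>2 \<le> G * H" using Hp by (simp add: field_simps)
    then show ?thesis by (simp add: P_def G_def H_def)
  qed
qed

lemma rad_avg_sqrt: "(\<And>x. 0 \<le> g x) \<Longrightarrow> rad_avg N c g \<le> sqrt (rad_avg N c (\<lambda>x. (g x)\<^sup>2))"
proof -
  assume g0: "\<And>x. 0 \<le> g x"
  have "(rad_avg N c (\<lambda>x. g x * 1))\<^sup>2 \<le> rad_avg N c (\<lambda>x. (g x)\<^sup>2) * rad_avg N c (\<lambda>x. 1\<^sup>2)"
    by (rule rad_avg_CS)
  then have "(rad_avg N c g)\<^sup>2 \<le> rad_avg N c (\<lambda>x. (g x)\<^sup>2)" by (simp add: rad_avg_const)
  then show ?thesis by (simp add: real_le_rsqrt)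
qed

lemma rad_avg_poly4:
  fixes c :: "nat \<Rightarrow> real"
  shows "rad_avg N c (\<lambda>x. a + b * x + d * x^2 + e * x^3 + g * x^4)
    = a + d * rad_avg N c (\<lambda>x. x^2) + g * rad_avg N c (\<lambda>x. x^4)"
proof -
  have o1: "rad_avg N c (\<lambda>x. x) = 0" by (rule rad_avg_odd) simp
  have o3: "rad_avg N c (\<lambda>x. x^3) = 0" by (rule rad_avg_odd) simp
  have "rad_avg N c (\<lambda>x. a + b * x + d * x^2 + e * x^3 + g * x^4)
     = rad_avg N c (\<lambda>x. a) + b * rad_avg N c (\<lambda>x. x) + d * rad_avg N c (\<lambda>x. x^2)
       + e * rad_avg N c (\<lambda>x. x^3) + g * rad_avg N c (\<lambda>x. x^4)"
    by (simp only: rad_avg_add rad_avg_scale)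
  then show ?thesis by (simp add: o1 o3 rad_avg_const)
qed

lemma rad_avg_moments:
  fixes c :: "nat \<Rightarrow> real"
  shows "rad_avg N c (\<lambda>x. x^2) = (\<Sum>k=1..N. (c k)^2) \<and> rad_avg N c (\<lambda>x. x^4) \<le> 3 * (\<Sum>k=1..N. (c k)^2)^2"
proof (induction N arbitrary: c)
  case 0 then show ?case by simp
next
  case (Suc N)
  define c' where "c' = (\<lambda>k. c (Suc k))"
  define M where "M = (\<Sum>k=1..N. (c' k)^2)"
  have IH: "rad_avg N c' (\<lambda>x. x^2) = M" "rad_avg N c' (\<lambda>x. x^4) \<le> 3 * M^2"
    using Suc.IH[of c'] by (auto simp: M_def)
  have sumeq: "(\<Sum>k=1..Suc N. (c k)^2) = (c 1)^2 + M"
    unfolding M_def c'_def by (simp only: sum.atLeast1_atMost_eq sum.lessThan_Suc_shift One_nat_def)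
  let ?a = "c 1"
  have e2a: "(\<lambda>x. (?a + x)^2) = (\<lambda>x. ?a^2 + (2*?a) * x + 1 * x^2 + 0 * x^3 + 0 * x^4)"
    by (simp add: fun_eq_iff power2_eq_square algebra_simps)
  have e2b: "(\<lambda>x. (x - ?a)^2) = (\<lambda>x. ?a^2 + (-2*?a) * x + 1 * x^2 + 0 * x^3 + 0 * x^4)"
    by (simp add: fun_eq_iff power2_eq_square algebra_simps)
  have e4a: "(\<lambda>x. (?a + x)^4) = (\<lambda>x. ?a^4 + (4*?a^3) * x + (6*?a^2) * x^2 + (4*?a) * x^3 + 1 * x^4)"
    by (simp add: fun_eq_iff power2_eq_square power4_eq_xxxx power3_eq_cube algebra_simps)
  have e4b: "(\<lambda>x. (x - ?a)^4) = (\<lambda>x. ?a^4 + (-4*?a^3) * x + (6*?a^2) * x^2 + (-4*?a) * x^3 + 1 * x^4)"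
    by (simp add: fun_eq_iff power2_eq_square power4_eq_xxxx power3_eq_cube algebra_simps)
  have m2: "rad_avg (Suc N) c (\<lambda>x. x^2) = ?a^2 + M"
    by (simp only: rad_avg.simps c'_def[symmetric] e2a e2b rad_avg_poly4 IH) simp
  have m4: "rad_avg (Suc N) c (\<lambda>x. x^4) = ?a^4 + 6 * ?a^2 * M + rad_avg N c' (\<lambda>x. x^4)"
    by (simp only: rad_avg.simps c'_def[symmetric] e4a e4b rad_avg_poly4 IH) simp
  have "?a^4 + 6 * ?a^2 * M + rad_avg N c' (\<lambda>x. x^4) \<le> ?a^4 + 6 * ?a^2 * M + 3 * M^2"
    using IH by simp
  also have "\<dots> \<le> 3 * (?a^2 + M)^2"
  proof -
    have "3 * (?a^2 + M)^2 = ?a^4 + 6 * ?a^2 * M + 3 * M^2 + 2 * ?a^4"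
      by (simp add: power2_eq_square power4_eq_xxxx algebra_simps)
    moreover have "0 \<le> ?a^4" by simp
    ultimately show ?thesis by linarith
  qed
  finally show ?case using m2 m4 sumeq by simp
qed

lemma khintchine1:
  fixes c :: "nat \<Rightarrow> real"
  shows "sqrt (\<Sum>k=1..N. (c k)^2) \<le> sqrt 3 * rad_avg N c abs"
proof -
  define M where "M = (\<Sum>k=1..N. (c k)^2)"
  define s where "s = sqrt M"
  define A where "A = rad_avg N c abs"
  have M0: "0 \<le> M" unfolding M_def by (simp add: sum_nonneg)
  have sM: "s^2 = M" "0 \<le> s" using M0 by (auto simp: s_def)
  have mom: "rad_avg N c (\<lambda>x. x^2) = M" "rad_avg N c (\<lambda>x. x^4) \<le> 3 * M^2"
    using rad_avg_moments[of N c] by (auto simp: M_def)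
  have A0: "0 \<le> A" unfolding A_def by (rule rad_avg_nonneg) simp
  have c1: "(rad_avg N c (\<lambda>x. sqrt \<bar>x\<bar> * (sqrt \<bar>x\<bar> * \<bar>x\<bar>)))\<^sup>2
      \<le> rad_avg N c (\<lambda>x. (sqrt \<bar>x\<bar>)\<^sup>2) * rad_avg N c (\<lambda>x. (sqrt \<bar>x\<bar> * \<bar>x\<bar>)\<^sup>2)"
    by (rule rad_avg_CS)
  have f1: "(\<lambda>x::real. sqrt \<bar>x\<bar> * (sqrt \<bar>x\<bar> * \<bar>x\<bar>)) = (\<lambda>x. x^2)"
    by (simp add: fun_eq_iff power2_eq_square mult.assoc[symmetric])
  have f2: "(\<lambda>x::real. (sqrt \<bar>x\<bar>)\<^sup>2) = abs" by (simp add: fun_eq_iff)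
  have f3: "(\<lambda>x::real. (sqrt \<bar>x\<bar> * \<bar>x\<bar>)\<^sup>2) = (\<lambda>x. \<bar>x\<bar> * x^2)"
    by (simp add: fun_eq_iff power_mult_distrib)
  have c1': "M^2 \<le> A * rad_avg N c (\<lambda>x. \<bar>x\<bar> * x^2)"
    using c1 unfolding f1 f2 f3 mom A_def .
  have c2: "(rad_avg N c (\<lambda>x. \<bar>x\<bar> * x^2))\<^sup>2 \<le> rad_avg N c (\<lambda>x. \<bar>x\<bar>\<^sup>2) * rad_avg N c (\<lambda>x. (x^2)\<^sup>2)"
    by (rule rad_avg_CS)
  have "(\<lambda>x::real. \<bar>x\<bar>\<^sup>2) = (\<lambda>x. x^2)" by simp
  moreover have "(\<lambda>x::real. (x^2)\<^sup>2) = (\<lambda>x. x^4)" by (simp add: fun_eq_iff power2_eq_square power4_eq_xxxx)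
  ultimately have c2': "(rad_avg N c (\<lambda>x. \<bar>x\<bar> * x^2))\<^sup>2 \<le> M * rad_avg N c (\<lambda>x. x^4)"
    using c2 mom by simp
  define T where "T = rad_avg N c (\<lambda>x. \<bar>x\<bar> * x^2)"
  have T0: "0 \<le> T" unfolding T_def by (rule rad_avg_nonneg) simp
  have "T^2 \<le> M * (3 * M^2)"
    using c2' mom(2) M0 unfolding T_def by (meson mult_left_mono order_trans)
  also have "\<dots> = (sqrt 3 * s^3)^2"
  proof -
    have "(sqrt 3 * s^3)^2 = (sqrt 3)^2 * (s^3)^2" by (rule power_mult_distrib)
    also have "\<dots> = 3 * (s^2)^3" by (simp flip: power_mult add: mult.commute)
    also have "\<dots> = M * (3 * M^2)" using sM(1) by (simp add: power3_eq_cube power2_eq_square)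
    finally show ?thesis by simp
  qed
  finally have "T^2 \<le> (sqrt 3 * s^3)^2" .
  then have "T \<le> sqrt 3 * s^3" by (rule power2_le_imp_le) (simp add: sM(2))
  then have "A * T \<le> A * (sqrt 3 * s^3)" using A0 by (rule mult_left_mono)
  moreover have "M^2 \<le> A * T" using c1' unfolding T_def .
  moreover have "M^2 = s^4" using sM(1) by (simp add: power4_eq_xxxx power2_eq_square)
  ultimately have "s^4 \<le> A * (sqrt 3 * s^3)" by linarith
  then have "s \<le> sqrt 3 * A"
  proof (cases "s = 0")
    case True then show ?thesis using A0 by simp
  next
    case False
    assume h: "s^4 \<le> A * (sqrt 3 * s^3)"
    have sp: "s^3 > 0" using False sM(2) by simp
    have "s * s^3 = s^4" by (simp add: power4_eq_xxxx power3_eq_cube)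
    moreover have "A * (sqrt 3 * s^3) = (sqrt 3 * A) * s^3" by simp
    ultimately have "s * s^3 \<le> (sqrt 3 * A) * s^3" using h by (simp only: mult_ac)
    then show ?thesis using sp by (rule mult_right_le_imp_le)
  qed
  then show ?thesis unfolding s_def M_def A_def .
qed

lemma seq_norm_fin: "seq_norm (ereal r) m b = (\<Sum>i=1..m. \<bar>b i\<bar> powr r) powr (1 / r)"
  by (simp add: seq_norm_def)

lemma seq_norm_nonneg: "0 \<le> seq_norm s m b"
proof (cases "s = \<infinity>")
  case True
  have "0 \<le> Sup (insert 0 ((\<lambda>i. \<bar>b i\<bar>) ` {1..m}))"
    by (rule cSup_upper) (auto intro: bdd_above_finite)
  then show ?thesis using True by (simp add: seq_norm_def)
qed (simp add: seq_norm_def)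

lemma conj_exp_fin: assumes "1 < q" shows "\<exists>r\<ge>1. conj_exp q = ereal r"
proof (cases "q = \<infinity>")
  case True then show ?thesis by (simp add: conj_exp_def)
next
  case False
  then obtain q' where q: "q = ereal q'" using assms by (cases q) auto
  then have "q' > 1" using assms by simp
  then have "q' / (q' - 1) \<ge> 1" by (simp add: field_simps)
  then show ?thesis using q by (auto simp: conj_exp_def)
qed

lemma sum_powr_mono:
  fixes b c :: "'i \<Rightarrow> real"
  assumes "r > 0" "\<And>i. i \<in> I \<Longrightarrow> \<bar>b i\<bar> \<le> \<bar>c i\<bar>"
  shows "(\<Sum>i\<in>I. \<bar>b i\<bar> powr r) powr (1 / r) \<le> (\<Sum>i\<in>I. \<bar>c i\<bar> powr r) powr (1 / r)"
proof -
  have "(\<Sum>i\<in>I. \<bar>b i\<bar> powr r) \<le> (\<Sum>i\<in>I. \<bar>c i\<bar> powr r)"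
    by (intro sum_mono powr_mono2) (use assms in auto)
  then show ?thesis using assms by (intro powr_mono2) (auto intro: sum_nonneg)
qed

lemma sum_powr_homog:
  fixes b :: "'i \<Rightarrow> real"
  assumes "r > 0"
  shows "(\<Sum>i\<in>I. \<bar>b i * a\<bar> powr r) powr (1 / r) = \<bar>a\<bar> * (\<Sum>i\<in>I. \<bar>b i\<bar> powr r) powr (1 / r)"
proof -
  have "(\<Sum>i\<in>I. \<bar>b i * a\<bar> powr r) = (\<Sum>i\<in>I. \<bar>b i\<bar> powr r * \<bar>a\<bar> powr r)"
    by (rule sum.cong) (auto simp: abs_mult powr_mult)
  also have "\<dots> = (\<Sum>i\<in>I. \<bar>b i\<bar> powr r) * \<bar>a\<bar> powr r" by (simp add: sum_distrib_right)
  finally have "(\<Sum>i\<in>I. \<bar>b i * a\<bar> powr r) = (\<Sum>i\<in>I. \<bar>b i\<bar> powr r) * \<bar>a\<bar> powr r" .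
  then have "(\<Sum>i\<in>I. \<bar>b i * a\<bar> powr r) powr (1 / r) = (\<Sum>i\<in>I. \<bar>b i\<bar> powr r) powr (1/r) * (\<bar>a\<bar> powr r) powr (1/r)"
    by (simp add: powr_mult sum_nonneg)
  also have "(\<bar>a\<bar> powr r) powr (1/r) = \<bar>a\<bar>" using assms by (simp add: powr_powr)
  finally show ?thesis by simp
qed

lemma wn_bdd:
  fixes x :: "nat \<Rightarrow> 'a::real_normed_vector"
  assumes "r > 0"
  shows "bdd_above ((\<lambda>f::'a \<Rightarrow>\<^sub>L real. seq_norm (ereal r) m (\<lambda>i. blinfun_apply f (x i))) ` {f. norm f \<le> 1})"
proof (rule bdd_aboveI2)
  fix f :: "'a \<Rightarrow>\<^sub>L real" assume "f \<in> {f. norm f \<le> 1}"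
  then have f: "norm f \<le> 1" by simp
  have "\<bar>blinfun_apply f (x i)\<bar> \<le> \<bar>norm (x i)\<bar>" for i
  proof -
    have "\<bar>blinfun_apply f (x i)\<bar> \<le> norm f * norm (x i)" using norm_blinfun[of f "x i"] by simp
    also have "\<dots> \<le> 1 * norm (x i)" using f by (intro mult_right_mono) auto
    finally show ?thesis by simp
  qed
  then show "seq_norm (ereal r) m (\<lambda>i. blinfun_apply f (x i)) \<le> seq_norm (ereal r) m (\<lambda>i. norm (x i))"
    unfolding seq_norm_fin using assms by (intro sum_powr_mono) auto
qed

lemma wn_upper:
  fixes x :: "nat \<Rightarrow> 'a::real_normed_vector"
  assumes "r > 0" "norm f \<le> 1"
  shows "seq_norm (ereal r) m (\<lambda>i. blinfun_apply f (x i)) \<le> weak_norm (ereal r) m x"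
  unfolding weak_norm_def by (rule cSup_upper) (use assms wn_bdd[OF assms(1)] in auto)

lemma wn_nonneg:
  fixes x :: "nat \<Rightarrow> 'a::real_normed_vector"
  assumes "r > 0"
  shows "0 \<le> weak_norm (ereal r) m x"
proof -
  have "seq_norm (ereal r) m (\<lambda>i. blinfun_apply 0 (x i)) \<le> weak_norm (ereal r) m x"
    by (rule wn_upper[OF assms]) simp
  moreover have "0 \<le> seq_norm (ereal r) m (\<lambda>i. blinfun_apply 0 (x i))" by (rule seq_norm_nonneg)
  ultimately show ?thesis by linarith
qed

lemma wn_least:
  fixes x :: "nat \<Rightarrow> 'a::real_normed_vector"
  assumes "\<And>f::'a \<Rightarrow>\<^sub>L real. norm f \<le> 1 \<Longrightarrow> seq_norm s m (\<lambda>i. blinfun_apply f (x i)) \<le> B"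
  shows "weak_norm s m x \<le> B"
  unfolding weak_norm_def
  by (rule cSup_least) (use assms in \<open>auto intro!: exI[of _ 0]\<close>)

lemma wn_eval:
  fixes y :: "nat \<Rightarrow> ('b::real_normed_vector \<Rightarrow>\<^sub>L real)"
  assumes "r > 0"
  shows "seq_norm (ereal r) m (\<lambda>i. blinfun_apply (y i) w) \<le> weak_norm (ereal r) m y * norm w"
proof (cases "w = 0")
  case True
  then show ?thesis using assms by (simp add: seq_norm_fin)
next
  case False
  define w1 where "w1 = w /\<^sub>R norm w"
  define ev where "ev = Blinfun (\<lambda>g::'b \<Rightarrow>\<^sub>L real. blinfun_apply g w1)"
  have ev: "blinfun_apply ev g = blinfun_apply g w1" for g
    unfolding ev_def by (simp add: bounded_linear_Blinfun_apply bounded_linear_apply_blinfun)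
  have "norm ev \<le> 1"
  proof (rule norm_blinfun_bound)
    fix g :: "'b \<Rightarrow>\<^sub>L real"
    have "norm (blinfun_apply g w1) \<le> norm g * norm w1" by (rule norm_blinfun)
    also have "norm w1 = 1" using False by (simp add: w1_def)
    finally show "norm (blinfun_apply ev g) \<le> 1 * norm g" by (simp add: ev)
  qed simp
  then have "seq_norm (ereal r) m (\<lambda>i. blinfun_apply ev (y i)) \<le> weak_norm (ereal r) m y"
    by (rule wn_upper[OF assms])
  moreover have "seq_norm (ereal r) m (\<lambda>i. blinfun_apply (y i) w) = norm w * seq_norm (ereal r) m (\<lambda>i. blinfun_apply ev (y i))"
  proof -
    have "blinfun_apply (y i) w = blinfun_apply ev (y i) * norm w" for i
      using False by (simp add: ev w1_def blinfun.scaleR_right)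
    then show ?thesis unfolding seq_norm_fin
      using sum_powr_homog[OF assms, of "\<lambda>i. blinfun_apply ev (y i)" "norm w" "{1..m}"] by simp
  qed
  ultimately show ?thesis by (simp add: mult.commute mult_left_mono)
qed

lemma holder_fin:
  fixes a b :: "nat \<Rightarrow> real"
  assumes "r > 1" "s > 1" "1/r + 1/s = 1" "\<And>i. 0 \<le> a i" "\<And>i. 0 \<le> b i" "finite I"
  shows "(\<Sum>i\<in>I. a i * b i) \<le> (\<Sum>i\<in>I. a i powr r) powr (1/r) * (\<Sum>i\<in>I. b i powr s) powr (1/s)"
proof -
  define SA where "SA = (\<Sum>i\<in>I. a i powr r)"
  define SB where "SB = (\<Sum>i\<in>I. b i powr s)"
  define A where "A = SA powr (1/r)"
  define B where "B = SB powr (1/s)"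
  have SA0: "0 \<le> SA" "0 \<le> SB" by (auto simp: SA_def SB_def intro: sum_nonneg)
  show ?thesis
  proof (cases "SA = 0 \<or> SB = 0")
    case True
    then have "\<forall>i\<in>I. a i = 0 \<or> b i = 0"
      using assms by (auto simp: SA_def SB_def sum_nonneg_eq_0_iff)
    then have "(\<Sum>i\<in>I. a i * b i) = 0" by (intro sum.neutral) auto
    then show ?thesis by (simp add: sum_nonneg)
  next
    case False
    then have Ap: "A > 0" "B > 0" using SA0 by (auto simp: A_def B_def)
    have Ar: "A powr r = SA" "B powr s = SB" using SA0 assms(1,2) by (auto simp: A_def B_def powr_powr)
    have "(\<Sum>i\<in>I. (a i / A) * (b i / B)) \<le> (\<Sum>i\<in>I. (a i / A) powr r / r + (b i / B) powr s / s)"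
      by (rule sum_mono, rule Youngs_inequality) (use assms Ap in auto)
    also have "\<dots> = (\<Sum>i\<in>I. a i powr r) / A powr r / r + (\<Sum>i\<in>I. b i powr s) / B powr s / s"
      using assms Ap by (simp add: powr_divide sum.distrib sum_divide_distrib)
    also have "\<dots> = 1" using Ar False SA0 assms(3) by (simp add: SA_def SB_def)
    finally have "(\<Sum>i\<in>I. a i * b i) / (A * B) \<le> 1"
      by (simp add: sum_divide_distrib)
    then show ?thesis using Ap by (simp add: A_def B_def SA_def SB_def field_simps)
  qed
qed

lemma holder_seq:
  fixes a b :: "nat \<Rightarrow> real"
  assumes "1 < q" "\<And>i. 0 \<le> a i"
  shows "(\<Sum>i=1..m. a i * \<bar>b i\<bar>) \<le> seq_norm q m a * seq_norm (conj_exp q) m b"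
proof (cases "q = \<infinity>")
  case True
  define S where "S = Sup (insert 0 ((\<lambda>i. \<bar>a i\<bar>) ` {1..m}))"
  have aS: "a i \<le> S" if "i \<in> {1..m}" for i
  proof -
    have "\<bar>a i\<bar> \<le> S" unfolding S_def by (rule cSup_upper) (use that in \<open>auto intro: bdd_above_finite\<close>)
    then show ?thesis by simp
  qed
  have "(\<Sum>i=1..m. a i * \<bar>b i\<bar>) \<le> (\<Sum>i=1..m. S * \<bar>b i\<bar>)"
    by (rule sum_mono) (use aS in \<open>auto intro: mult_right_mono\<close>)
  also have "\<dots> = S * (\<Sum>i=1..m. \<bar>b i\<bar>)" by (simp add: sum_distrib_left)
  finally show ?thesis using True by (simp add: seq_norm_def conj_exp_def S_def)
next
  case False
  then obtain q' where q: "q = ereal q'" using assms by (cases q) auto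
  then have q1: "q' > 1" using assms by simp
  have c: "conj_exp (ereal q') = ereal (q' / (q' - 1))" by (simp add: conj_exp_def)
  have "(\<Sum>i=1..m. a i * \<bar>b i\<bar>) \<le> (\<Sum>i=1..m. a i powr q') powr (1/q') * (\<Sum>i=1..m. \<bar>b i\<bar> powr (q'/(q'-1))) powr (1/(q'/(q'-1)))"
    by (rule holder_fin) (use q1 assms in \<open>auto simp: field_simps\<close>)
  then show ?thesis using assms(2) by (simp add: q c seq_norm_fin)
qed

lemma l2_le_lr:
  fixes z :: "'i \<Rightarrow> real"
  assumes "1 \<le> r" "r \<le> 2" "finite I"
  shows "sqrt (\<Sum>j\<in>I. (z j)^2) \<le> (\<Sum>j\<in>I. \<bar>z j\<bar> powr r) powr (1/r)"
proof -
  define S where "S = (\<Sum>j\<in>I. \<bar>z j\<bar> powr r)"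
  define N where "N = S powr (1/r)"
  have S0: "0 \<le> S" unfolding S_def by (simp add: sum_nonneg)
  show ?thesis
  proof (cases "S = 0")
    case True
    then have "\<forall>j\<in>I. z j = 0" using assms(3) by (simp add: S_def sum_nonneg_eq_0_iff)
    then show ?thesis by simp
  next
    case False
    then have Sp: "S > 0" using S0 by simp
    have NS: "N powr r = S" using Sp assms(1) by (simp add: N_def powr_powr)
    have N0: "N > 0" using Sp by (simp add: N_def)
    have zle: "\<bar>z j\<bar> \<le> N" if "j \<in> I" for j
    proof -
      have "\<bar>z j\<bar> powr r \<le> S" unfolding S_def
        by (rule member_le_sum) (use that assms(3) in auto)
      then have "(\<bar>z j\<bar> powr r) powr (1/r) \<le> S powr (1/r)" using assms(1) by (intro powr_mono2) auto
      then show ?thesis using assms(1) by (simp add: N_def powr_powr)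
    qed
    have pt: "(z j)^2 \<le> \<bar>z j\<bar> powr r * N powr (2 - r)" if "j \<in> I" for j
    proof (cases "z j = 0")
      case True then show ?thesis by simp
    next
      case False
      have "(z j)^2 = \<bar>z j\<bar> powr 2" using False by (simp add: powr_numeral)
      also have "\<dots> = \<bar>z j\<bar> powr r * \<bar>z j\<bar> powr (2 - r)" using False by (simp flip: powr_add)
      also have "\<dots> \<le> \<bar>z j\<bar> powr r * N powr (2 - r)"
        by (intro mult_left_mono powr_mono2) (use assms zle[OF that] in auto)
      finally show ?thesis .
    qed
    have "(\<Sum>j\<in>I. (z j)^2) \<le> (\<Sum>j\<in>I. \<bar>z j\<bar> powr r * N powr (2 - r))"
      by (rule sum_mono) (rule pt)
    also have "\<dots> = S * N powr (2 - r)" by (simp add: S_def sum_distrib_right)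
    also have "\<dots> = N powr r * N powr (2 - r)" by (simp add: NS)
    also have "\<dots> = N^2" using N0 by (simp flip: powr_add add: powr_numeral)
    finally have "(\<Sum>j\<in>I. (z j)^2) \<le> N^2" .
    then have "sqrt (\<Sum>j\<in>I. (z j)^2) \<le> sqrt (N^2)" by (rule real_sqrt_le_mono)
    then show ?thesis using N0 by (simp add: N_def S_def)
  qed
qed

lemma lin_sum:
  assumes "subspace F"
    and add: "\<forall>x\<in>F. \<forall>y\<in>F. v (x + y) = (\<lambda>i. v x i + v y i)"
    and hom: "\<forall>x\<in>F. \<forall>c. v (c *\<^sub>R x) = (\<lambda>i. c * v x i)"
    and "finite J" "\<forall>j\<in>J. w j \<in> F"
  shows "v (\<Sum>j\<in>J. a j *\<^sub>R w j) = (\<lambda>i. \<Sum>j\<in>J. a j * v (w j) i)"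
  using assms(4,5)
proof (induction J rule: finite_induct)
  case empty
  have "v ((0::real) *\<^sub>R 0) = (\<lambda>i. 0 * v 0 i)" using hom subspace_0[OF assms(1)] by blast
  then show ?case by simp
next
  case (insert j J)
  have s: "(\<Sum>j\<in>J. a j *\<^sub>R w j) \<in> F" using insert assms(1)
    by (intro subspace_sum) (auto intro: subspace_scale)
  have "v (\<Sum>j\<in>insert j J. a j *\<^sub>R w j) = v (a j *\<^sub>R w j + (\<Sum>j\<in>J. a j *\<^sub>R w j))"
    using insert by simp
  also have "\<dots> = (\<lambda>i. v (a j *\<^sub>R w j) i + v (\<Sum>j\<in>J. a j *\<^sub>R w j) i)"
    using add s insert assms(1) by (simp add: subspace_scale)
  also have "\<dots> = (\<lambda>i. a j * v (w j) i + (\<Sum>j\<in>J. a j * v (w j) i))"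
    using hom insert by simp
  finally show ?case using insert by simp
qed

lemma claimA:
  fixes v :: "'a::real_normed_vector \<Rightarrow> nat \<Rightarrow> real" and X :: "nat \<Rightarrow> 'a"
    and f :: "'a \<Rightarrow>\<^sub>L real"
  assumes "subspace F"
    and add: "\<forall>x\<in>F. \<forall>y\<in>F. v (x + y) = (\<lambda>i. v x i + v y i)"
    and hom: "\<forall>x\<in>F. \<forall>c. v (c *\<^sub>R x) = (\<lambda>i. c * v x i)"
    and X: "\<And>j. j < n \<Longrightarrow> X j \<in> F \<and> v (X j) = (\<lambda>i. if i = j then 1 else 0)"
    and bnd: "\<forall>x\<in>F. norm x \<le> b * lr_norm r n (v x)"
    and p: "p > 1" "r = p / (p - 1)" and b0: "b \<ge> 0" and f: "norm f \<le> 1"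
  shows "(\<Sum>j<n. \<bar>blinfun_apply f (X j)\<bar> powr p) powr (1/p) \<le> b"
proof -
  define c where "c j = blinfun_apply f (X j)" for j
  define P where "P = (\<Sum>j<n. \<bar>c j\<bar> powr p)"
  have P0: "0 \<le> P" by (simp add: P_def sum_nonneg)
  show ?thesis
  proof (cases "P = 0")
    case True
    then show ?thesis using b0 by (simp add: P_def c_def)
  next
    case False
    then have Pp: "P > 0" using P0 by simp
    define Nc where "Nc = P powr (1/p)"
    have Ncp: "Nc > 0" using Pp by (simp add: Nc_def)
    have Ncpow: "Nc powr p = P" using Pp p by (simp add: Nc_def powr_powr)
    define al where "al j = sgn (c j) * \<bar>c j\<bar> powr (p - 1) / Nc powr (p - 1)" for j
    define xa where "xa = (\<Sum>j<n. al j *\<^sub>R X j)"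
    have xaF: "xa \<in> F" unfolding xa_def using X assms(1)
      by (intro subspace_sum) (auto intro: subspace_scale)
    have vxa: "v xa = (\<lambda>i. \<Sum>j<n. al j * v (X j) i)"
      unfolding xa_def by (rule lin_sum[OF assms(1) add hom]) (use X in auto)
    have vxa2: "v xa i = (if i < n then al i else 0)" for i
      using X by (simp add: vxa if_distrib cong: if_cong)
    have ac: "al j * c j = \<bar>c j\<bar> powr p / Nc powr (p - 1)" for j
    proof (cases "c j = 0")
      case True then show ?thesis by (simp add: al_def)
    next
      case False
      have "sgn (c j) * c j = \<bar>c j\<bar>" by (simp add: sgn_if abs_if)
      moreover have "\<bar>c j\<bar> powr (p - 1) * \<bar>c j\<bar> = \<bar>c j\<bar> powr p"
        using False by (simp add: powr_diff)
      ultimately show ?thesis unfolding al_def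
        by (metis (no_types, lifting) mult.assoc mult.commute times_divide_eq_left)
    qed
    have fxa: "blinfun_apply f xa = P / Nc powr (p - 1)"
      unfolding xa_def by (simp add: blinfun.sum_right blinfun.scaleR_right c_def[symmetric] ac P_def sum_divide_distrib)
    have "P / Nc powr (p - 1) = Nc powr p / Nc powr (p - 1)" by (simp add: Ncpow)
    also have "\<dots> = Nc" using Ncp by (simp add: powr_diff[symmetric])
    finally have fxa2: "blinfun_apply f xa = Nc" using fxa by simp
    have ar: "\<bar>al j\<bar> powr r = \<bar>c j\<bar> powr p / P" for j
    proof -
      have "\<bar>al j\<bar> = \<bar>c j\<bar> powr (p - 1) / Nc powr (p - 1)"
        by (cases "c j = 0") (auto simp: al_def abs_mult abs_sgn_eq)
      then have "\<bar>al j\<bar> powr r = (\<bar>c j\<bar> powr (p - 1)) powr r / (Nc powr (p - 1)) powr r"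
        by (simp add: powr_divide)
      also have "\<dots> = \<bar>c j\<bar> powr p / Nc powr p"
        using p by (simp add: powr_powr)
      finally show ?thesis by (simp add: Ncpow)
    qed
    have "lr_norm r n (v xa) = (\<Sum>i<n. \<bar>c i\<bar> powr p / P) powr (1 / r)"
      unfolding lr_norm_def by (simp add: vxa2 ar)
    also have "\<dots> = 1" using Pp by (simp add: P_def[symmetric] sum_divide_distrib[symmetric])
    finally have lr1: "lr_norm r n (v xa) = 1" .
    have "Nc \<le> \<bar>blinfun_apply f xa\<bar>" using fxa2 by simp
    also have "\<dots> \<le> norm f * norm xa" using norm_blinfun[of f xa] by simp
    also have "\<dots> \<le> 1 * norm xa" using f by (intro mult_right_mono) auto
    also have "\<dots> \<le> b" using bnd xaF lr1 by auto
    finally show ?thesis by (simp add: Nc_def P_def c_def)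
  qed
qed

theorem theorem3p1:
  fixes p :: real and q :: ereal
    and u :: "'a::banach \<Rightarrow>\<^sub>L 'b::banach"
  assumes "2 \<le> p" and "1 < q"
    and "Lr_space (p / (p - 1)) TYPE('a)"
    and "almost_summing p u"
  shows "Cohen_strongly_summing q u"
proof -
  obtain C0 where C00: "C0 \<ge> 0" and C0: "\<And>m (x::nat \<Rightarrow> 'a).
        sqrt (integral {0..1} (\<lambda>t. (norm (\<Sum>i=1..m. rademacher i t *\<^sub>R blinfun_apply u (x i)))\<^sup>2))
          \<le> C0 * weak_norm (ereal p) m x"
    using assms(4) unfolding almost_summing_def by blast
  define r where "r = p / (p - 1)"
  obtain lam where lam: "lam > 1" and LR: "\<forall>E::'a set. fin_dim_subspace E \<longrightarrow>
        (\<exists>F. fin_dim_subspace F \<and> E \<subseteq> F \<and>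
           (\<exists>(v::'a \<Rightarrow> nat \<Rightarrow> real) a b.
              (\<forall>x\<in>F. \<forall>y\<in>F. v (x + y) = (\<lambda>i. v x i + v y i)) \<and>
              (\<forall>x\<in>F. \<forall>c. v (c *\<^sub>R x) = (\<lambda>i. c * v x i)) \<and>
              bij_betw v F {z. \<forall>i\<ge>dim F. z i = 0} \<and>
              (\<forall>x\<in>F. lr_norm r (dim F) (v x) \<le> a * norm x) \<and>
              (\<forall>x\<in>F. norm x \<le> b * lr_norm r (dim F) (v x)) \<and>
              a * b \<le> lam))"
    using assms(3) unfolding Lr_space_def r_def by blast
  have p1: "p > 1" using assms(1) by simp
  have r1: "1 \<le> r" "r \<le> 2" using assms(1) by (auto simp: r_def field_simps)
  obtain rq where rq: "rq \<ge> 1" "conj_exp q = ereal rq" using conj_exp_fin[OF assms(2)] by blast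
  show ?thesis unfolding Cohen_strongly_summing_def
  proof (intro exI[of _ "sqrt 3 * C0 * lam"] conjI allI)
    show "0 \<le> sqrt 3 * C0 * lam" using C00 lam by simp
    fix m and x :: "nat \<Rightarrow> 'a" and y :: "nat \<Rightarrow> ('b \<Rightarrow>\<^sub>L real)"
    define SN where "SN = strong_norm q m x"
    define WN where "WN = weak_norm (conj_exp q) m y"
    have SN0: "0 \<le> SN" unfolding SN_def strong_norm_def by (rule seq_norm_nonneg)
    have WN0: "0 \<le> WN" unfolding WN_def rq(2) by (rule wn_nonneg) (use rq in simp)
    have main: "(\<Sum>i=1..m. \<bar>blinfun_apply (y i) (blinfun_apply u (x i))\<bar>)
          \<le> sqrt 3 * C0 * lam * SN * WN"
    proof (cases "\<forall>i\<in>{1..m}. x i = 0")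
      case True
      then have "(\<Sum>i=1..m. \<bar>blinfun_apply (y i) (blinfun_apply u (x i))\<bar>) = 0" by simp
      then show ?thesis using SN0 WN0 C00 lam by simp
    next
      case False
      then obtain i0 where i0: "i0 \<in> {1..m}" "x i0 \<noteq> 0" by blast
      define E where "E = span (x ` {1..m})"
      have finE: "fin_dim_subspace E" unfolding fin_dim_subspace_def E_def
        by (auto simp: subspace_span)
      obtain F v a b where Ff: "fin_dim_subspace F" and EF: "E \<subseteq> F"
        and add: "\<forall>x\<in>F. \<forall>y\<in>F. v (x + y) = (\<lambda>i. v x i + v y i)"
        and hom: "\<forall>x\<in>F. \<forall>c. v (c *\<^sub>R x) = (\<lambda>i. c * v x i)"
        and bij: "bij_betw v F {z. \<forall>i\<ge>dim F. z i = 0}"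
        and abnd: "\<forall>x\<in>F. lr_norm r (dim F) (v x) \<le> a * norm x"
        and bbnd: "\<forall>x\<in>F. norm x \<le> b * lr_norm r (dim F) (v x)"
        and ab: "a * b \<le> lam"
        using LR finE by blast
      define n where "n = dim F"
      have sF: "subspace F" using Ff by (simp add: fin_dim_subspace_def)
      have xF: "x i \<in> F" if "i \<in> {1..m}" for i
        using EF that unfolding E_def by (meson imageI span_base subsetD)
      have inj: "inj_on v F" using bij by (simp add: bij_betw_def)
      have vimg: "v ` F = {z. \<forall>i\<ge>n. z i = 0}" using bij by (simp add: bij_betw_def n_def)
      define e where "e j = (\<lambda>i::nat. if i = j then 1::real else 0)" for j :: nat
      define X where "X j = inv_into F v (e j)" for j
      have X: "X j \<in> F \<and> v (X j) = (\<lambda>i. if i = j then 1 else 0)" if "j < n" for j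
      proof -
        have "e j \<in> v ` F" unfolding vimg using that by (auto simp: e_def)
        then show ?thesis unfolding X_def by (auto simp: e_def[symmetric] intro: inv_into_into f_inv_into_f)
      qed
      have vT: "v z i = 0" if "z \<in> F" "i \<ge> n" for z i
        using that vimg by blast
      have repr: "z = (\<Sum>j<n. v z j *\<^sub>R X j)" if zF: "z \<in> F" for z
      proof (rule inj_onD[OF inj])
        show "(\<Sum>j<n. v z j *\<^sub>R X j) \<in> F" using X sF
          by (intro subspace_sum) (auto intro: subspace_scale)
        have "v (\<Sum>j<n. v z j *\<^sub>R X j) = (\<lambda>i. \<Sum>j<n. v z j * v (X j) i)"
          by (rule lin_sum[OF sF add hom]) (use X in auto)
        also have "\<dots> = v z"
        proof
          fix i
          show "(\<Sum>j<n. v z j * v (X j) i) = v z i"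
            using X vT[OF zF, of i] by (simp add: if_distrib cong: if_cong)
        qed
        finally show "v z = v (\<Sum>j<n. v z j *\<^sub>R X j)" by simp
      qed (use zF in simp)
      have lr0: "0 \<le> lr_norm r k w" for k w by (simp add: lr_norm_def)
      have xi0: "x i0 \<in> F" using xF i0 by simp
      have a0: "a \<ge> 0"
      proof -
        have "0 \<le> a * norm (x i0)" using abnd xi0 lr0 by (meson order_trans)
        then show ?thesis using i0 by (simp add: zero_le_mult_iff)
      qed
      have b0: "b \<ge> 0"
      proof -
        have "0 < norm (x i0)" using i0 by simp
        also have "\<dots> \<le> b * lr_norm r (dim F) (v (x i0))" using bbnd xi0 by blast
        finally have "0 < b * lr_norm r (dim F) (v (x i0))" .
        then show ?thesis using lr0[of "dim F" "v (x i0)"] by (auto simp: zero_less_mult_iff)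
      qed
      define Xs where "Xs k = X (k - 1)" for k
      define B where "B k = blinfun_apply u (Xs k)" for k
      have intg: "integral {0..1} (\<lambda>t. (norm (\<Sum>i=1..n. rademacher i t *\<^sub>R blinfun_apply u (Xs i)))\<^sup>2)
          = rad_avg n B (\<lambda>w. (norm w)\<^sup>2)"
        using radsum_integral[of "\<lambda>w. (norm w)\<^sup>2" n B] unfolding radsum_def B_def
        by (rule integral_unique)
      have wnX: "weak_norm (ereal p) n Xs \<le> b"
      proof (rule wn_least)
        fix f :: "'a \<Rightarrow>\<^sub>L real" assume f: "norm f \<le> 1"
        have "(\<Sum>j<n. \<bar>blinfun_apply f (X j)\<bar> powr p) powr (1/p) \<le> b"
          by (rule claimA[OF sF add hom X _ p1 r_def b0 f]) (use bbnd n_def in auto)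
        then show "seq_norm (ereal p) n (\<lambda>i. blinfun_apply f (Xs i)) \<le> b"
          unfolding seq_norm_fin by (simp add: sum.atLeast1_atMost_eq Xs_def)
      qed
      have avg2: "sqrt (rad_avg n B (\<lambda>w. (norm w)\<^sup>2)) \<le> C0 * b"
      proof -
        have "sqrt (rad_avg n B (\<lambda>w. (norm w)\<^sup>2)) \<le> C0 * weak_norm (ereal p) n Xs"
          using C0[where m=n and x=Xs] unfolding intg .
        also have "\<dots> \<le> C0 * b" using wnX C00 by (rule mult_left_mono)
        finally show ?thesis .
      qed
      have per: "\<bar>blinfun_apply (y i) (blinfun_apply u (x i))\<bar>
          \<le> a * sqrt 3 * (norm (x i) * rad_avg n B (\<lambda>w. \<bar>blinfun_apply (y i) w\<bar>))"
        if i: "i \<in> {1..m}" for i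
      proof -
        define z where "z = v (x i)"
        define d where "d k = blinfun_apply (y i) (B k)" for k
        have "blinfun_apply (y i) (blinfun_apply u (x i))
            = blinfun_apply (y i) (blinfun_apply u (\<Sum>j<n. z j *\<^sub>R X j))"
          using repr[OF xF[OF i]] by (simp add: z_def)
        also have "\<dots> = (\<Sum>j<n. z j * d (Suc j))"
          by (simp add: blinfun.sum_right blinfun.scaleR_right d_def B_def Xs_def)
        finally have eq: "blinfun_apply (y i) (blinfun_apply u (x i)) = (\<Sum>j<n. z j * d (Suc j))" .
        have "(\<Sum>j<n. z j * d (Suc j))\<^sup>2 \<le> (\<Sum>j<n. (z j)\<^sup>2) * (\<Sum>j<n. (d (Suc j))\<^sup>2)"
          by (rule Cauchy_Schwarz_ineq_sum)
        then have cs: "\<bar>\<Sum>j<n. z j * d (Suc j)\<bar> \<le> sqrt (\<Sum>j<n. (z j)\<^sup>2) * sqrt (\<Sum>j<n. (d (Suc j))\<^sup>2)"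
          by (metis real_sqrt_abs real_sqrt_le_mono real_sqrt_mult)
        have zb: "sqrt (\<Sum>j<n. (z j)\<^sup>2) \<le> a * norm (x i)"
        proof -
          have "sqrt (\<Sum>j<n. (z j)\<^sup>2) \<le> (\<Sum>j<n. \<bar>z j\<bar> powr r) powr (1/r)"
            by (rule l2_le_lr) (use r1 in auto)
          also have "\<dots> = lr_norm r n z" by (simp add: lr_norm_def)
          also have "\<dots> \<le> a * norm (x i)" using abnd xF[OF i] by (simp add: z_def n_def)
          finally show ?thesis .
        qed
        have db: "sqrt (\<Sum>j<n. (d (Suc j))\<^sup>2) \<le> sqrt 3 * rad_avg n B (\<lambda>w. \<bar>blinfun_apply (y i) w\<bar>)"
        proof -
          have "sqrt (\<Sum>j<n. (d (Suc j))\<^sup>2) = sqrt (\<Sum>k=1..n. (d k)\<^sup>2)"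
            by (simp add: sum.atLeast1_atMost_eq)
          also have "\<dots> \<le> sqrt 3 * rad_avg n d abs" by (rule khintchine1)
          also have "rad_avg n d abs = rad_avg n B (\<lambda>w. \<bar>blinfun_apply (y i) w\<bar>)"
            unfolding d_def
            by (rule rad_avg_comp[symmetric]) (simp add: bounded_linear.linear blinfun.bounded_linear_right)
          finally show ?thesis .
        qed
        have "\<bar>\<Sum>j<n. z j * d (Suc j)\<bar>
            \<le> (a * norm (x i)) * (sqrt 3 * rad_avg n B (\<lambda>w. \<bar>blinfun_apply (y i) w\<bar>))"
        proof -
          have "sqrt (\<Sum>j<n. (z j)\<^sup>2) * sqrt (\<Sum>j<n. (d (Suc j))\<^sup>2)
              \<le> (a * norm (x i)) * (sqrt 3 * rad_avg n B (\<lambda>w. \<bar>blinfun_apply (y i) w\<bar>))"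
            by (rule mult_mono[OF zb db]) (use a0 in \<open>auto intro: sum_nonneg\<close>)
          then show ?thesis using cs by linarith
        qed
        then show ?thesis using eq by (simp add: mult_ac)
      qed
      have pw: "(\<Sum>i=1..m. norm (x i) * \<bar>blinfun_apply (y i) w\<bar>) \<le> SN * WN * norm w" for w
      proof -
        have "(\<Sum>i=1..m. norm (x i) * \<bar>blinfun_apply (y i) w\<bar>)
            \<le> seq_norm q m (\<lambda>i. norm (x i)) * seq_norm (conj_exp q) m (\<lambda>i. blinfun_apply (y i) w)"
          by (rule holder_seq[OF assms(2)]) simp
        also have "seq_norm (conj_exp q) m (\<lambda>i. blinfun_apply (y i) w) \<le> WN * norm w"
          unfolding WN_def rq(2) by (rule wn_eval) (use rq in simp)
        finally show ?thesis using SN0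
          by (simp add: SN_def strong_norm_def mult_left_mono mult.assoc)
      qed
      have "(\<Sum>i=1..m. \<bar>blinfun_apply (y i) (blinfun_apply u (x i))\<bar>)
          \<le> (\<Sum>i=1..m. a * sqrt 3 * (norm (x i) * rad_avg n B (\<lambda>w. \<bar>blinfun_apply (y i) w\<bar>)))"
        by (rule sum_mono) (rule per)
      also have "\<dots> = a * sqrt 3 * rad_avg n B (\<lambda>w. \<Sum>i=1..m. norm (x i) * \<bar>blinfun_apply (y i) w\<bar>)"
        by (simp add: rad_avg_sum rad_avg_scale sum_distrib_left)
      also have "\<dots> \<le> a * sqrt 3 * rad_avg n B (\<lambda>w. SN * WN * norm w)"
        using a0 by (intro mult_left_mono rad_avg_mono pw) auto
      also have "\<dots> = a * sqrt 3 * (SN * WN * rad_avg n B norm)"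
        by (simp add: rad_avg_scale)
      also have "\<dots> \<le> a * sqrt 3 * (SN * WN * (C0 * b))"
      proof -
        have "rad_avg n B norm \<le> sqrt (rad_avg n B (\<lambda>w. (norm w)\<^sup>2))" by (rule rad_avg_sqrt) simp
        also have "\<dots> \<le> C0 * b" by (rule avg2)
        finally show ?thesis using a0 SN0 WN0 by (intro mult_left_mono) auto
      qed
      also have "\<dots> = sqrt 3 * C0 * (a * b) * SN * WN" by (simp add: mult_ac)
      also have "\<dots> \<le> sqrt 3 * C0 * lam * SN * WN"
        using ab C00 SN0 WN0 by (intro mult_right_mono mult_left_mono) auto
      finally show ?thesis .
    qed
    then show "(\<Sum>i=1..m. \<bar>blinfun_apply (y i) (blinfun_apply u (x i))\<bar>)
          \<le> sqrt 3 * C0 * lam * strong_norm q m x * weak_norm (conj_exp q) m y"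
      by (simp add: SN_def WN_def)
  qed
qed

end
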